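(* Let $A\in\mathbb{R}^{m\times n}$ with $m<n$ have unit $\ell_2$-norm columns and mutual coherence $\mu=\mu(A)$. Let $x\in\mathbb{R}^n$ and $y\in\mathbb{R}^m$ satisfy $\|y-Ax\|_2\le\epsilon$. Let $k$ be a positive integer, let $x_k$ be the best $k$-term approximation of $x$, and let $T_0$ be its support. Let $T\subset[n]=\{1,\dots,n\}$ be an arbitrary set, and define $\rho\ge 0$ and $\alpha\in[0,1]$ by $|T|=\rho k$ and $|T\cap T_0|=\alpha\rho k$. Fix a weight $w\in[0,1]$ and let $x^*$ be a minimizer of $$\min_{z\in\mathbb{R}^n}\|z\|_{1,w}\quad\text{subject to}\quad \|y-Az\|_2\le\epsilon,$$ where $\|z\|_{1,w}=\sum_{i=1}^n w_i|z_i|$ with $w_i=w$ for $i\in T$ and $w_i=1$ for $i\notin T$. Suppose that $$k<\begin{cases}\left(\dfrac{1}{2\sqrt{\rho}\,(2w\sqrt{\alpha}+1)}\left(w+\sqrt{w^2+4(2w\sqrt{\alpha}+1)\left(1+\tfrac{1}{\mu}\right)}\right)\right)^2, & \text{if } w\in(0,1],\\[2ex] \dfrac{1}{\rho}\left(1+\dfrac{1}{\mu}\right), & \text{if } w=0.\end{cases}$$ Then $$\|x^*_T-x_T\|_2\le C_0\,\epsilon+C_1\Big(w\|x-x_k\|_1+(1-w)\|x_{T^c\cap T_0^c}\|_1+\|x_{T^c\cap T_0}\|_1\Big),$$ where $$C_0=\frac{2\sqrt{1+(\rho k-1)\mu}}{1+\mu+w\mu\sqrt{\rho k}-\mu\rho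 k(2w\sqrt{\alpha}+1)},\qquad C_1=\frac{2\mu\sqrt{\rho k}}{1+\mu+w\mu\sqrt{\rho k}-\mu\rho k(2w\sqrt{\alpha}+1)}.$$
   Context: The mutual coherence of a matrix $A$ with columns $a_1,\dots,a_n$ is $\mu(A)=\max_{i\neq j}\frac{|a_i^Ta_j|}{\|a_i\|_2\|a_j\|_2}$. The best $k$-term approximation $x_k$ of $x$ keeps (at most) $k$ largest-magnitude coordinates of $x$ and sets the rest to zero. For a vector $v\in\mathbb{R}^n$ and a set $S\subseteq[n]$, $v_S$ denotes the restriction of $v$ to the coordinates in $S$ (equivalently, the vector agreeing with $v$ on $S$ and zero elsewhere); $S^c=[n]\setminus S$. *)

theory Defs
  imports "HOL-Analysis.Analysis"
begin

definition mutual_coherence :: "real^'n^'m \<Rightarrow> real" where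
  "mutual_coherence A =
     Max {\<bar>column i A \<bullet> column j A\<bar> / (norm (column i A) * norm (column j A)) | i j. i \<noteq> j}"

definition restrict_vec :: "real^'n \<Rightarrow> 'n set \<Rightarrow> real^'n" where
  "restrict_vec v S = (\<chi> i. if i \<in> S then v $ i else 0)"

definition l1norm :: "real^'n \<Rightarrow> real" where
  "l1norm v = (\<Sum>i\<in>UNIV. \<bar>v $ i\<bar>)"

definition wl1norm :: "real \<Rightarrow> 'n set \<Rightarrow> real^'n \<Rightarrow> real" where
  "wl1norm w T v = (\<Sum>i\<in>UNIV. (if i \<in> T then w else 1) * \<bar>v $ i\<bar>)"

definition best_k_term :: "real^'n \<Rightarrow> nat \<Rightarrow> real^'n \<Rightarrow> bool" where
  "best_k_term x k xk \<longleftrightarrow>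
     (\<exists>S. card S = min k CARD('n) \<and>
          (\<forall>i\<in>S. \<forall>j. j \<notin> S \<longrightarrow> \<bar>x $ j\<bar> \<le> \<bar>x $ i\<bar>) \<and>
          xk = restrict_vec x S)"

definition supp_vec :: "real^'n \<Rightarrow> 'n set" where
  "supp_vec v = {i. v $ i \<noteq> 0}"

end

theory Submission
  imports Defs
begin


lemma gram_bound:
  fixes A :: "real^'n^'m" and u v :: "real^'n"
  assumes unit: "\<forall>i. norm (column i A) = 1"
    and coh: "\<forall>i j. i \<noteq> j \<longrightarrow> \<bar>column i A \<bullet> column j A\<bar> \<le> \<mu>"
  shows "\<bar>(A *v u) \<bullet> (A *v v) - (\<Sum>i\<in>UNIV. u$i * v$i)\<bar>
     \<le> \<mu> * ((\<Sum>i\<in>UNIV. \<bar>u$i\<bar>) * (\<Sum>j\<in>UNIV. \<bar>v$j\<bar>) - (\<Sum>i\<in>UNIV. \<bar>u$i\<bar> * \<bar>v$i\<bar>))"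
proof -
  let ?c = "\<lambda>i. column i A"
  have diag: "?c i \<bullet> ?c i = 1" for i
    using unit by (metis norm_eq_sqrt_inner real_sqrt_eq_1_iff)
  have ip: "(A *v u) \<bullet> (A *v v) = (\<Sum>i\<in>UNIV. \<Sum>j\<in>UNIV. u$i * v$j * (?c i \<bullet> ?c j))"
    unfolding matrix_mult_sum
    by (simp add: inner_sum_left inner_sum_right scalar_mult_eq_scaleR mult.assoc mult.left_commute)
       (subst sum.swap, simp add: sum_distrib_left mult_ac)
  have split: "(\<Sum>i\<in>UNIV. \<Sum>j\<in>UNIV. u$i * v$j * (?c i \<bullet> ?c j))
      = (\<Sum>i\<in>UNIV. \<Sum>j\<in>UNIV. (if i = j then 0 else u$i * v$j * (?c i \<bullet> ?c j))) + (\<Sum>i\<in>UNIV. u$i * v$i)"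
  proof -
    have "(\<Sum>j\<in>UNIV. u$i * v$j * (?c i \<bullet> ?c j)) = (\<Sum>j\<in>UNIV. (if i = j then 0 else u$i * v$j * (?c i \<bullet> ?c j))) + u$i * v$i" for i
    proof -
      have "(\<Sum>j\<in>UNIV. u$i * v$j * (?c i \<bullet> ?c j)) = (\<Sum>j\<in>UNIV. (if i = j then 0 else u$i * v$j * (?c i \<bullet> ?c j)) + (if i = j then u$i * v$i else 0))"
        by (rule sum.cong) (auto simp: diag)
      then show ?thesis by (simp add: sum.distrib)
    qed
    then show ?thesis by (simp add: sum.distrib)
  qed
  have bnd: "\<bar>\<Sum>i\<in>UNIV. \<Sum>j\<in>UNIV. (if i = j then 0 else u$i * v$j * (?c i \<bullet> ?c j))\<bar>
     \<le> (\<Sum>i\<in>UNIV. \<Sum>j\<in>UNIV. (if i = j then 0 else \<mu> * (\<bar>u$i\<bar> * \<bar>v$j\<bar>)))"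
  proof -
    have "\<bar>\<Sum>i\<in>UNIV. \<Sum>j\<in>UNIV. (if i = j then 0 else u$i * v$j * (?c i \<bullet> ?c j))\<bar>
       \<le> (\<Sum>i\<in>UNIV. \<Sum>j\<in>UNIV. \<bar>if i = j then 0 else u$i * v$j * (?c i \<bullet> ?c j)\<bar>)"
      by (rule order_trans[OF sum_abs]) (intro sum_mono sum_abs)
    also have "\<dots> \<le> (\<Sum>i\<in>UNIV. \<Sum>j\<in>UNIV. (if i = j then 0 else \<mu> * (\<bar>u$i\<bar> * \<bar>v$j\<bar>)))"
    proof (intro sum_mono)
      fix i j :: 'n
      show "\<bar>if i = j then 0 else u$i * v$j * (?c i \<bullet> ?c j)\<bar> \<le> (if i = j then 0 else \<mu> * (\<bar>u$i\<bar> * \<bar>v$j\<bar>))"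
      proof (cases "i = j")
        case False
        then have "\<bar>?c i \<bullet> ?c j\<bar> \<le> \<mu>" using coh by blast
        then have "\<bar>u$i * v$j\<bar> * \<bar>?c i \<bullet> ?c j\<bar> \<le> \<bar>u$i * v$j\<bar> * \<mu>"
          by (intro mult_left_mono) auto
        then show ?thesis using False by (simp add: abs_mult mult_ac)
      qed simp
    qed
    finally show ?thesis .
  qed
  have eq2: "(\<Sum>i\<in>UNIV. \<Sum>j\<in>UNIV. (if i = j then 0 else \<mu> * (\<bar>u$i\<bar> * \<bar>v$j\<bar>)))
     = \<mu> * ((\<Sum>i\<in>UNIV. \<bar>u$i\<bar>) * (\<Sum>j\<in>UNIV. \<bar>v$j\<bar>) - (\<Sum>i\<in>UNIV. \<bar>u$i\<bar> * \<bar>v$i\<bar>))"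
  proof -
    have "(\<Sum>j\<in>UNIV. (if i = j then 0 else \<mu> * (\<bar>u$i\<bar> * \<bar>v$j\<bar>))) = \<mu> * (\<bar>u$i\<bar> * (\<Sum>j\<in>UNIV. \<bar>v$j\<bar>) - \<bar>u$i\<bar> * \<bar>v$i\<bar>)" for i
    proof -
      have "(\<Sum>j\<in>UNIV. (if i = j then 0 else \<mu> * (\<bar>u$i\<bar> * \<bar>v$j\<bar>))) = (\<Sum>j\<in>UNIV. \<mu> * (\<bar>u$i\<bar> * \<bar>v$j\<bar>) - (if i = j then \<mu> * (\<bar>u$i\<bar> * \<bar>v$i\<bar>) else 0))"
        by (rule sum.cong) auto
      then show ?thesis by (simp add: sum_subtractf sum_distrib_left algebra_simps)
    qed
    then have "(\<Sum>i\<in>UNIV. \<Sum>j\<in>UNIV. (if i = j then 0 else \<mu> * (\<bar>u$i\<bar> * \<bar>v$j\<bar>)))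
       = (\<Sum>i\<in>UNIV. \<mu> * (\<bar>u$i\<bar> * (\<Sum>j\<in>UNIV. \<bar>v$j\<bar>) - \<bar>u$i\<bar> * \<bar>v$i\<bar>))"
      by (intro sum.cong) auto
    also have "\<dots> = \<mu> * ((\<Sum>i\<in>UNIV. \<bar>u$i\<bar>) * (\<Sum>j\<in>UNIV. \<bar>v$j\<bar>) - (\<Sum>i\<in>UNIV. \<bar>u$i\<bar> * \<bar>v$i\<bar>))"
      by (simp add: sum_subtractf sum_distrib_left sum_distrib_right right_diff_distrib, subst sum.swap, simp)
    finally show ?thesis .
  qed
  show ?thesis using ip split bnd eq2 by simp
qed

lemma cs_sum:
  fixes f :: "'a \<Rightarrow> real"
  assumes "finite S"
  shows "(\<Sum>i\<in>S. \<bar>f i\<bar>) \<le> sqrt (real (card S)) * sqrt (\<Sum>i\<in>S. (f i)\<^sup>2)"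
proof -
  have "(\<Sum>i\<in>S. \<bar>f i\<bar> * \<bar>1\<bar>) \<le> L2_set f S * L2_set (\<lambda>_. 1) S"
    by (rule L2_set_mult_ineq)
  then show ?thesis by (simp add: L2_set_constant L2_set_def mult.commute)
qed

lemma Dpos_lemma:
  fixes mu w c t R :: real
  assumes "mu \<ge> 0" "c > 0" "w \<ge> 0" "2 * c * t - w < R" "R = sqrt (w\<^sup>2 + 4 * c * (1 + 1 / mu))" "t \<ge> 0"
  shows "1 + mu + w * mu * t - mu * t\<^sup>2 * c > 0"
proof (cases "mu = 0")
  case True then show ?thesis by simp
next
  case False
  then have mup: "mu > 0" using assms by simp
  have key: "c * t\<^sup>2 - w * t < 1 + 1 / mu"
  proof (cases "2 * c * t - w \<le> 0")
    case True
    then have "c * t\<^sup>2 - w * t \<le> c * t\<^sup>2 - 2 * c * t * t"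
      using assms(6) by (simp add: mult_right_mono)
    also have "\<dots> \<le> 0" using assms by (simp add: power2_eq_square)
    finally show ?thesis using mup by (smt (verit) divide_pos_pos)
  next
    case False
    have "(2 * c * t - w)\<^sup>2 < R\<^sup>2"
      using False assms(4) by (intro power_strict_mono) auto
    also have "R\<^sup>2 = w\<^sup>2 + 4 * c * (1 + 1 / mu)"
      using assms mup by simp
    finally have "4 * c * (c * t\<^sup>2 - w * t) < 4 * c * (1 + 1 / mu)"
      by (simp add: power2_eq_square algebra_simps)
    then show ?thesis using assms(2) by simp
  qed
  have "mu * (c * t\<^sup>2 - w * t) < mu * (1 + 1 / mu)"
    using key mup by simp
  then show ?thesis using mup by (simp add: algebra_simps)
qed

theorem theorem6:
  fixes A :: "real^'n^'m" and x xk xstar :: "real^'n" and y :: "real^'m"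
    and eps rho alpha w :: real and k :: nat and T :: "'n set"
  assumes mn: "CARD('m) < CARD('n)"
    and unit_cols: "\<forall>i. norm (column i A) = 1"
    and noise: "norm (y - A *v x) \<le> eps"
    and kpos: "k > 0"
    and best: "best_k_term x k xk"
    and rho_nonneg: "rho \<ge> 0"
    and alpha_range: "0 \<le> alpha" "alpha \<le> 1"
    and cardT: "real (card T) = rho * real k"
    and cardTT0: "real (card (T \<inter> supp_vec xk)) = alpha * rho * real k"
    and w_range: "0 \<le> w" "w \<le> 1"
    and xstar_feas: "norm (y - A *v xstar) \<le> eps"
    and xstar_min: "\<forall>z. norm (y - A *v z) \<le> eps \<longrightarrow> wl1norm w T xstar \<le> wl1norm w T z"
    and kbound:
      "rho = 0 \<or>
       (if w > 0 then
          real k < ((1 / (2 * sqrt rho * (2 * w * sqrt alpha + 1))) *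
                    (w + sqrt (w\<^sup>2 + 4 * (2 * w * sqrt alpha + 1) *
                                  (1 + 1 / mutual_coherence A))))\<^sup>2
        else real k < (1 / rho) * (1 + 1 / mutual_coherence A))"
  shows
    "let \<mu> = mutual_coherence A;
         T0 = supp_vec xk;
         D = 1 + \<mu> + w * \<mu> * sqrt (rho * k) - \<mu> * rho * k * (2 * w * sqrt alpha + 1);
         C0 = 2 * sqrt (1 + (rho * k - 1) * \<mu>) / D;
         C1 = 2 * \<mu> * sqrt (rho * k) / D
     in norm (restrict_vec xstar T - restrict_vec x T)
        \<le> C0 * eps + C1 * (w * l1norm (x - xk)
                            + (1 - w) * l1norm (restrict_vec x (- T \<inter> - T0))
                            + l1norm (restrict_vec x (- T \<inter> T0)))"
proof -
  define mu where "mu = mutual_coherence A"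
  define T0 where "T0 = supp_vec xk"
  define s where "s = real (card T)"
  define c where "c = 2 * w * sqrt alpha + 1"
  define D where "D = 1 + mu + w * mu * sqrt s - mu * s * c"
  define Q where "Q = sqrt (1 + (s - 1) * mu)"
  define P where "P = w * l1norm (x - xk) + (1 - w) * l1norm (restrict_vec x (- T \<inter> - T0))
                            + l1norm (restrict_vec x (- T \<inter> T0))"
  have rk: "rho * real k = s" using cardT s_def by simp
  have cpos: "c \<ge> 1" using w_range alpha_range by (simp add: c_def)
  let ?f = "\<lambda>i j. \<bar>column i A \<bullet> column j A\<bar> / (norm (column i A) * norm (column j A))"
  let ?M = "{?f i j | i j. i \<noteq> j}"
  have finM: "finite ?M"
  proof -
    have "?M \<subseteq> (\<lambda>(i,j). ?f i j) ` UNIV" by auto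
    then show ?thesis by (rule finite_subset) simp
  qed
  have mu_def': "mu = Max ?M" unfolding mu_def mutual_coherence_def by simp
  have coh: "\<forall>i j. i \<noteq> j \<longrightarrow> \<bar>column i A \<bullet> column j A\<bar> \<le> mu"
  proof (intro allI impI)
    fix i j :: 'n assume "i \<noteq> j"
    then have "?f i j \<in> ?M" by blast
    then have "?f i j \<le> mu" unfolding mu_def' using finM by simp
    then show "\<bar>column i A \<bullet> column j A\<bar> \<le> mu" using unit_cols by simp
  qed
  obtain i0 j0 :: 'n where ij: "i0 \<noteq> j0"
  proof -
    have "CARD('m) > 0" by simp
    then have c2: "CARD('n) \<ge> 2" using mn by linarith
    have "\<not> (\<forall>i j :: 'n. i = j)"
    proof
      assume all: "\<forall>i j :: 'n. i = j"
      then have u: "(UNIV :: 'n set) = {undefined}" by auto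
      have "CARD('n) = card {undefined :: 'n}" by (subst u) (rule refl)
      then have "CARD('n) = 1" by simp
      then show False using c2 by simp
    qed
    then show ?thesis using that by blast
  qed
  have mu_nonneg: "mu \<ge> 0" using coh ij by (meson abs_ge_zero order_trans)
  have Mne: "?M \<noteq> {}" using ij by blast
  have mu_le1: "mu \<le> 1"
  proof -
    have "\<forall>m\<in>?M. m \<le> 1"
    proof
      fix m assume "m \<in> ?M"
      then obtain i j where "m = ?f i j" by blast
      moreover have "\<bar>column i A \<bullet> column j A\<bar> \<le> norm (column i A) * norm (column j A)"
        by (rule Cauchy_Schwarz_ineq2)
      ultimately show "m \<le> 1" using unit_cols by simp
    qed
    then show ?thesis unfolding mu_def' using finM Mne by simp
  qed
  define h where "h = xstar - x"
  define hT where "hT = restrict_vec h T"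
  define a where "a = (\<Sum>i\<in>T. \<bar>h$i\<bar>)"
  define a1 where "a1 = (\<Sum>i\<in>T \<inter> T0. \<bar>h$i\<bar>)"
  define H where "H = (\<Sum>i\<in>UNIV. \<bar>h$i\<bar>)"
  define B where "B = (\<Sum>i\<in>T. (h$i)\<^sup>2)"
  define b where "b = sqrt B"
  have B_nonneg: "B \<ge> 0" unfolding B_def by (simp add: sum_nonneg)
  have b_nonneg: "b \<ge> 0" unfolding b_def using B_nonneg by simp
  have bB: "b\<^sup>2 = B" unfolding b_def using B_nonneg by simp
  have a_nonneg: "a \<ge> 0" unfolding a_def by (simp add: sum_nonneg)
  have a1_nonneg: "a1 \<ge> 0" unfolding a1_def by (simp add: sum_nonneg)
  have lhs: "norm (restrict_vec xstar T - restrict_vec x T) = b"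
  proof -
    have "restrict_vec xstar T - restrict_vec x T = hT"
      by (simp add: hT_def h_def restrict_vec_def vec_eq_iff)
    moreover have "norm hT = sqrt (\<Sum>i\<in>UNIV. (if i \<in> T then (h$i)\<^sup>2 else 0))"
      unfolding norm_vec_def L2_set_def hT_def restrict_vec_def
      by (intro arg_cong[where f=sqrt] sum.cong) auto
    ultimately show ?thesis
      by (simp add: b_def B_def sum.inter_restrict[symmetric])
  qed
  have s_sqrt: "sqrt s \<le> s"
  proof (cases "card T = 0")
    case True then show ?thesis by (simp add: s_def)
  next
    case False then have "card T \<ge> 1" by linarith
    then have "s \<ge> 1" by (simp add: s_def)
    then have "s \<le> s\<^sup>2" by (simp add: power2_eq_square)
    then have "sqrt s \<le> sqrt (s\<^sup>2)" by (rule real_sqrt_le_mono)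
    then show ?thesis using \<open>s \<ge> 1\<close> by simp
  qed
  have Qarg: "1 + (s - 1) * mu \<ge> 0"
  proof (cases "card T = 0")
    case True then show ?thesis using mu_le1 by (simp add: s_def)
  next
    case False then have "card T \<ge> 1" by linarith
    then have "s \<ge> 1" by (simp add: s_def)
    then show ?thesis using mu_nonneg by simp
  qed
  have Q_nonneg: "Q \<ge> 0" unfolding Q_def using Qarg by simp
  have finT: "finite T" by simp
  have sum_if: "(\<Sum>i\<in>UNIV. (if i \<in> S then g i else 0)) = (\<Sum>i\<in>S. g i)" for S and g :: "'n \<Rightarrow> real"
    using sum.inter_restrict[of UNIV g S] by simp
  have s1: "(\<Sum>i\<in>UNIV. \<bar>hT$i\<bar>) = a"
  proof -
    have "(\<Sum>i\<in>UNIV. \<bar>hT$i\<bar>) = (\<Sum>i\<in>UNIV. (if i \<in> T then \<bar>h$i\<bar> else 0))"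
      by (rule sum.cong) (auto simp: hT_def restrict_vec_def)
    then show ?thesis by (simp add: sum_if a_def)
  qed
  have s2: "(\<Sum>i\<in>UNIV. hT$i * h$i) = B"
  proof -
    have "(\<Sum>i\<in>UNIV. hT$i * h$i) = (\<Sum>i\<in>UNIV. (if i \<in> T then (h$i)\<^sup>2 else 0))"
      by (rule sum.cong) (auto simp: hT_def restrict_vec_def power2_eq_square)
    then show ?thesis by (simp add: sum_if B_def)
  qed
  have s3: "(\<Sum>i\<in>UNIV. \<bar>hT$i\<bar> * \<bar>h$i\<bar>) = B"
  proof -
    have "(\<Sum>i\<in>UNIV. \<bar>hT$i\<bar> * \<bar>h$i\<bar>) = (\<Sum>i\<in>UNIV. (if i \<in> T then (h$i)\<^sup>2 else 0))"
      by (rule sum.cong) (auto simp: hT_def restrict_vec_def power2_eq_square abs_mult[symmetric])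
    then show ?thesis by (simp add: sum_if B_def)
  qed
  have s4: "(\<Sum>i\<in>UNIV. hT$i * hT$i) = B"
  proof -
    have "(\<Sum>i\<in>UNIV. hT$i * hT$i) = (\<Sum>i\<in>UNIV. (if i \<in> T then (h$i)\<^sup>2 else 0))"
      by (rule sum.cong) (auto simp: hT_def restrict_vec_def power2_eq_square)
    then show ?thesis by (simp add: sum_if B_def)
  qed
  have s5: "(\<Sum>i\<in>UNIV. \<bar>hT$i\<bar> * \<bar>hT$i\<bar>) = B"
  proof -
    have "(\<Sum>i\<in>UNIV. \<bar>hT$i\<bar> * \<bar>hT$i\<bar>) = (\<Sum>i\<in>UNIV. (if i \<in> T then (h$i)\<^sup>2 else 0))"
      by (rule sum.cong) (auto simp: hT_def restrict_vec_def power2_eq_square abs_mult[symmetric])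
    then show ?thesis by (simp add: sum_if B_def)
  qed
  have G1: "\<bar>(A *v hT) \<bullet> (A *v h) - B\<bar> \<le> mu * (a * H - B)"
    using gram_bound[OF unit_cols coh, of hT h] s1 s2 s3 by (simp add: H_def)
  have G2: "\<bar>(A *v hT) \<bullet> (A *v hT) - B\<bar> \<le> mu * (a * a - B)"
    using gram_bound[OF unit_cols coh, of hT hT] s1 s4 s5 by simp
  have cs_a: "a \<le> sqrt s * b"
    using cs_sum[OF finT, of "\<lambda>i. h$i"] by (simp add: a_def s_def b_def B_def)
  have cs_a1: "a1 \<le> sqrt alpha * sqrt s * b"
  proof -
    have "a1 \<le> sqrt (real (card (T \<inter> T0))) * sqrt (\<Sum>i\<in>T \<inter> T0. (h$i)\<^sup>2)"
      using cs_sum[of "T \<inter> T0" "\<lambda>i. h$i"] by (simp add: a1_def)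
    also have "sqrt (\<Sum>i\<in>T \<inter> T0. (h$i)\<^sup>2) \<le> b"
      unfolding b_def B_def by (intro real_sqrt_le_mono sum_mono2) auto
    then have "sqrt (real (card (T \<inter> T0))) * sqrt (\<Sum>i\<in>T \<inter> T0. (h$i)\<^sup>2) \<le> sqrt (real (card (T \<inter> T0))) * b"
      by (intro mult_left_mono) auto
    also have "real (card (T \<inter> T0)) = alpha * s" using cardTT0 rk T0_def by simp
    finally show ?thesis by (simp add: real_sqrt_mult)
  qed
  have aa: "a * a \<le> s * B"
  proof -
    have "a * a \<le> (sqrt s * b) * (sqrt s * b)" using cs_a a_nonneg by (intro mult_mono) auto
    also have "\<dots> = s * B" using bB by (simp add: s_def power2_eq_square algebra_simps)
    finally show ?thesis .
  qed
  have aa1: "a * a1 \<le> sqrt alpha * s * B"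
  proof -
    have "a * a1 \<le> (sqrt s * b) * (sqrt alpha * sqrt s * b)" using cs_a cs_a1 a_nonneg a1_nonneg
      by (intro mult_mono) auto
    also have "\<dots> = sqrt alpha * s * B" using bB by (simp add: s_def power2_eq_square algebra_simps)
    finally show ?thesis .
  qed
  have eps_nonneg: "eps \<ge> 0" using noise norm_ge_zero order_trans by blast
  have Ah: "norm (A *v h) \<le> 2 * eps"
  proof -
    have "A *v h = (y - A *v x) - (y - A *v xstar)"
      by (simp add: h_def matrix_vector_mult_diff_distrib)
    then have "norm (A *v h) \<le> norm (y - A *v x) + norm (y - A *v xstar)"
      by (metis norm_triangle_ineq4)
    then show ?thesis using noise xstar_feas by simp
  qed
  have AhT: "norm (A *v hT) \<le> Q * b"
  proof -
    have "(norm (A *v hT))\<^sup>2 = (A *v hT) \<bullet> (A *v hT)" by (simp add: power2_norm_eq_inner)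
    also have "\<dots> \<le> B + mu * (a * a - B)" using G2 by simp
    also have "\<dots> \<le> B + mu * (s * B - B)" using aa mu_nonneg by (simp add: mult_left_mono)
    also have "\<dots> = Q\<^sup>2 * b\<^sup>2"
    proof -
      have "Q\<^sup>2 = 1 + (s - 1) * mu" unfolding Q_def using Qarg by simp
      moreover have "B + mu * (s * B - B) = (1 + (s - 1) * mu) * B" by (simp add: algebra_simps)
      ultimately show ?thesis using bB by simp
    qed
    also have "\<dots> = (Q * b)\<^sup>2" by (simp add: power_mult_distrib)
    finally have "(norm (A *v hT))\<^sup>2 \<le> (Q * b)\<^sup>2" .
    moreover have "0 \<le> Q * b" using Q_nonneg b_nonneg by simp
    ultimately show ?thesis by (rule power2_le_imp_le)
  qed
  have ip: "(A *v hT) \<bullet> (A *v h) \<le> Q * b * (2 * eps)"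
  proof -
    have "(A *v hT) \<bullet> (A *v h) \<le> norm (A *v hT) * norm (A *v h)" by (rule norm_cauchy_schwarz)
    also have "\<dots> \<le> Q * b * (2 * eps)" using AhT Ah Q_nonneg b_nonneg by (intro mult_mono) auto
    finally show ?thesis .
  qed
  have I: "B - mu * (a * H - B) \<le> 2 * eps * Q * b" using G1 ip by (simp add: algebra_simps abs_le_iff)
  obtain S where xkS: "xk = restrict_vec x S"
    using best unfolding best_k_term_def by blast
  have xk_i: "xk$i = (if i \<in> S then x$i else 0)" for i by (simp add: xkS restrict_vec_def)
  have T0_iff: "i \<in> T0 \<longleftrightarrow> xk$i \<noteq> 0" for i by (simp add: T0_def supp_vec_def)
  define q where "q i = (if i \<in> T then (if i \<in> T0 then (1 + w) * \<bar>h$i\<bar> else (1 - w) * \<bar>h$i\<bar> + 2 * w * \<bar>x$i\<bar>)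
                       else 2 * \<bar>x$i\<bar>)" for i
  define wt where "wt i = (if i \<in> T then w else 1)" for i
  define E' where "E' = (\<Sum>i\<in>UNIV. (if i \<in> T then (if i \<in> T0 then 0 else 2 * w * \<bar>x$i\<bar>) else 2 * \<bar>x$i\<bar>))"
  have pw: "\<bar>h$i\<bar> - q i \<le> wt i * \<bar>xstar$i\<bar> - wt i * \<bar>x$i\<bar>" for i
  proof -
    have xs: "xstar$i = x$i + h$i" by (simp add: h_def)
    consider "i \<in> T" "i \<in> T0" | "i \<in> T" "i \<notin> T0" | "i \<notin> T" by blast
    then show ?thesis
    proof cases
      case 1
      have "w * (- \<bar>h$i\<bar>) \<le> w * (\<bar>x$i + h$i\<bar> - \<bar>x$i\<bar>)"
        using w_range by (intro mult_left_mono) auto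
      then show ?thesis using 1 by (simp add: q_def wt_def xs algebra_simps)
    next
      case 2
      have "w * (\<bar>h$i\<bar> - 2 * \<bar>x$i\<bar>) \<le> w * (\<bar>x$i + h$i\<bar> - \<bar>x$i\<bar>)"
        using w_range by (intro mult_left_mono) auto
      then show ?thesis using 2 by (simp add: q_def wt_def xs algebra_simps)
    next
      case 3
      then show ?thesis by (simp add: q_def wt_def xs)
    qed
  qed
  have wmin: "wl1norm w T xstar \<le> wl1norm w T x" using xstar_min noise by blast
  have Hq: "H - (\<Sum>i\<in>UNIV. q i) \<le> 0"
  proof -
    have "H - (\<Sum>i\<in>UNIV. q i) = (\<Sum>i\<in>UNIV. \<bar>h$i\<bar> - q i)" by (simp add: H_def sum_subtractf)
    also have "\<dots> \<le> (\<Sum>i\<in>UNIV. wt i * \<bar>xstar$i\<bar> - wt i * \<bar>x$i\<bar>)" by (intro sum_mono pw)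
    also have "\<dots> = wl1norm w T xstar - wl1norm w T x" by (simp add: wl1norm_def wt_def sum_subtractf)
    finally show ?thesis using wmin by simp
  qed
  have sq: "(\<Sum>i\<in>UNIV. q i) = (1 - w) * a + 2 * w * a1 + E'"
  proof -
    have "(\<Sum>i\<in>UNIV. q i) = (\<Sum>i\<in>UNIV. (1 - w) * (if i \<in> T then \<bar>h$i\<bar> else 0) + 2 * w * (if i \<in> T \<inter> T0 then \<bar>h$i\<bar> else 0)
        + (if i \<in> T then (if i \<in> T0 then 0 else 2 * w * \<bar>x$i\<bar>) else 2 * \<bar>x$i\<bar>))"
      by (rule sum.cong) (auto simp: q_def algebra_simps)
    also have "\<dots> = (1 - w) * (\<Sum>i\<in>UNIV. (if i \<in> T then \<bar>h$i\<bar> else 0)) + 2 * w * (\<Sum>i\<in>UNIV. (if i \<in> T \<inter> T0 then \<bar>h$i\<bar> else 0)) + E'"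
      by (simp add: sum.distrib sum_distrib_left E'_def)
    also have "\<dots> = (1 - w) * a + 2 * w * a1 + E'"
      by (simp only: sum_if a_def a1_def)
    finally show ?thesis .
  qed
  have Hbound: "H \<le> (1 - w) * a + 2 * w * a1 + E'" using Hq sq by simp
  have E'P: "E' = 2 * P"
  proof -
    have d: "\<bar>x$i - xk$i\<bar> = (if i \<in> T0 then 0 else \<bar>x$i\<bar>)" for i
      using T0_iff[of i] xk_i[of i] by auto
    have "E' = (\<Sum>i\<in>UNIV. 2 * (w * \<bar>(x - xk)$i\<bar>) + 2 * ((1 - w) * \<bar>restrict_vec x (- T \<inter> - T0) $ i\<bar>)
                 + 2 * \<bar>restrict_vec x (- T \<inter> T0) $ i\<bar>)"
      unfolding E'_def by (rule sum.cong) (auto simp: d restrict_vec_def algebra_simps)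
    also have "\<dots> = 2 * P"
      unfolding P_def l1norm_def by (simp only: sum.distrib sum_distrib_left distrib_left)
    finally show ?thesis .
  qed
  have P_nonneg: "P \<ge> 0" unfolding P_def l1norm_def using w_range
    by (intro add_nonneg_nonneg mult_nonneg_nonneg sum_nonneg) auto
  have s_nonneg: "s \<ge> 0" by (simp add: s_def)
  have Dpos: "D > 0"
  proof (cases "card T = 0")
    case True
    then have "s = 0" by (simp add: s_def)
    then show ?thesis using mu_nonneg by (simp add: D_def)
  next
    case False
    then have "card T \<ge> 1" by linarith
    then have s1: "s \<ge> 1" by (simp add: s_def)
    have rho_ne: "rho \<noteq> 0" using rk s1 by auto
    then have rho_pos: "rho > 0" using rho_nonneg by simp
    have kb: "if w > 0 then
          real k < ((1 / (2 * sqrt rho * c)) *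
                    (w + sqrt (w\<^sup>2 + 4 * c * (1 + 1 / mu))))\<^sup>2
        else real k < (1 / rho) * (1 + 1 / mu)"
      using kbound rho_ne unfolding c_def mu_def by blast
    show ?thesis
    proof (cases "w > 0")
      case True
      define R where "R = sqrt (w\<^sup>2 + 4 * c * (1 + 1 / mu))"
      define X where "X = (1 / (2 * sqrt rho * c)) * (w + R)"
      have R_nonneg: "R \<ge> 0" unfolding R_def using cpos mu_nonneg by simp
      have X_nonneg: "X \<ge> 0" unfolding X_def using R_nonneg cpos w_range rho_pos by simp
      have "real k < X\<^sup>2" using kb True by (simp add: X_def R_def)
      then have "sqrt (real k) < sqrt (X\<^sup>2)" by (rule real_sqrt_less_mono)
      then have sk: "sqrt (real k) < X" using X_nonneg by simp
      have st: "sqrt s = sqrt rho * sqrt (real k)" using rk by (simp add: real_sqrt_mult[symmetric])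
      have "sqrt rho * sqrt (real k) < sqrt rho * X" using sk rho_pos by simp
      also have "sqrt rho * X = (w + R) / (2 * c)" unfolding X_def using rho_pos cpos by (simp add: field_simps)
      finally have "sqrt s < (w + R) / (2 * c)" using st by simp
      then have "2 * c * sqrt s < w + R" using cpos by (simp add: field_simps)
      then have cR: "2 * c * sqrt s - w < R" by simp
      have "1 + mu + w * mu * sqrt s - mu * (sqrt s)\<^sup>2 * c > 0"
        by (rule Dpos_lemma[OF mu_nonneg _ w_range(1) cR R_def]) (use cpos s_nonneg in auto)
      moreover have "(sqrt s)\<^sup>2 = s" using s_nonneg by simp
      ultimately show ?thesis by (simp add: D_def mult_ac)
    next
      case False
      then have w0: "w = 0" using w_range by simp
      have "real k < (1 / rho) * (1 + 1 / mu)" using kb False by simp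
      then have "rho * real k < 1 + 1 / mu" using rho_pos by (simp add: field_simps)
      then have sm: "s < 1 + 1 / mu" using rk by simp
      show ?thesis
      proof (cases "mu = 0")
        case True then show ?thesis by (simp add: D_def)
      next
        case False
        then have mup: "mu > 0" using mu_nonneg by simp
        have "mu * s < mu * (1 + 1 / mu)" using sm mup by simp
        then have "mu * s < mu + 1" using mup by (simp add: algebra_simps)
        then show ?thesis using w0 by (simp add: D_def c_def)
      qed
    qed
  qed
  have E'_nonneg: "E' \<ge> 0" using E'P P_nonneg by simp
  have aH: "a * H \<le> (1 - w) * s * B + 2 * w * sqrt alpha * s * B + sqrt s * b * E'"
  proof -
    have "a * H \<le> a * ((1 - w) * a + 2 * w * a1 + E')" using Hbound a_nonneg by (rule mult_left_mono)
    also have "\<dots> = (1 - w) * (a * a) + 2 * (w * (a * a1)) + a * E'" by (simp add: algebra_simps)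
    also have "\<dots> \<le> (1 - w) * (s * B) + 2 * (w * (sqrt alpha * s * B)) + sqrt s * b * E'"
    proof -
      have "(1 - w) * (a * a) \<le> (1 - w) * (s * B)" using aa w_range by (intro mult_left_mono) auto
      moreover have "w * (a * a1) \<le> w * (sqrt alpha * s * B)" using aa1 w_range by (intro mult_left_mono) auto
      moreover have "a * E' \<le> sqrt s * b * E'" using cs_a E'_nonneg by (intro mult_right_mono) auto
      ultimately show ?thesis by linarith
    qed
    finally show ?thesis by (simp add: algebra_simps)
  qed
  have muaH: "mu * (a * H) \<le> mu * ((1 - w) * s * B + 2 * w * sqrt alpha * s * B + sqrt s * b * E')"
    using aH mu_nonneg by (rule mult_left_mono)
  have wss: "w * mu * B * sqrt s \<le> w * mu * B * s"
    using s_sqrt w_range mu_nonneg B_nonneg by (intro mult_left_mono) auto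
  have DB: "D * B \<le> b * (2 * eps * Q + mu * sqrt s * E')"
  proof -
    have "D * B = (1 + mu) * B + w * mu * B * sqrt s - mu * s * c * B" by (simp add: D_def algebra_simps)
    also have "\<dots> \<le> (1 + mu) * B + w * mu * B * s - mu * s * c * B" using wss by simp
    also have "\<dots> = B - mu * (((1 - w) * s * B + 2 * w * sqrt alpha * s * B + sqrt s * b * E') - B) + mu * sqrt s * b * E'"
      by (simp add: c_def algebra_simps)
    also have "\<dots> \<le> B - mu * (a * H - B) + mu * sqrt s * b * E'" using muaH by (simp add: algebra_simps)
    also have "\<dots> \<le> 2 * eps * Q * b + mu * sqrt s * b * E'" using I by simp
    also have "\<dots> = b * (2 * eps * Q + mu * sqrt s * E')"
      by (simp add: algebra_simps)
    finally show ?thesis .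
  qed
  have Rn: "2 * eps * Q + mu * sqrt s * E' \<ge> 0"
    using eps_nonneg Q_nonneg mu_nonneg E'_nonneg s_nonneg by simp
  have Db: "D * b \<le> 2 * eps * Q + mu * sqrt s * E'"
  proof (cases "b = 0")
    case True then show ?thesis using Rn by simp
  next
    case False
    then have bp: "b > 0" using b_nonneg by simp
    have "b * (D * b) \<le> b * (2 * eps * Q + mu * sqrt s * E')"
      using DB bB by (simp add: power2_eq_square mult_ac)
    then show ?thesis using bp by simp
  qed
  have fin: "b \<le> (2 * Q / D) * eps + (2 * mu * sqrt s / D) * P"
  proof -
    have "b \<le> (2 * eps * Q + mu * sqrt s * E') / D" using Db Dpos by (simp add: field_simps)
    also have "\<dots> = (2 * Q / D) * eps + (2 * mu * sqrt s / D) * P" using E'P by (simp add: add_divide_distrib algebra_simps)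
    finally show ?thesis .
  qed
  have e1: "mutual_coherence A * rho * real k = mu * s" using rk by (simp add: mu_def mult.assoc)
  have rk2: "rho * (real k * z) = s * z" for z using rk by (metis mult.assoc)
  show ?thesis
    unfolding Let_def mu_def[symmetric] T0_def[symmetric] rk e1
    using fin lhs by (simp add: D_def Q_def P_def c_def mult_ac rk2)
qed

end
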